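(* Let $?:[0,1]\to[0,1]$ be the Minkowski question mark function and let $k\in\mathbb{N}_0=\{0,1,2,\dots\}$. Suppose that $\int_0^1\cos(2\pi n x)\,d?(x)\to 0$ as $n\to\infty$ ($n\in\mathbb{N}$). Then $$\int_0^1 (ix)^k e^{itx}\,d?(x)=o(1)\quad\text{as } |t|\to\infty.$$
   Context: The Minkowski question mark function is defined on $[0,1]$ by $?(0)=0$, $?(1)=1$ and, for $x=[0;a_1,a_2,a_3,\dots]$ written as a regular continued fraction (finite for rational $x$, in which case the sum is finite), $?(x)=2\sum_{i\ge1}(-1)^{i+1}2^{-(a_1+\cdots+a_i)}$. It is continuous, strictly increasing and singular. The hypothesis is an affirmative answer to Salem's question whether the Fourier–Stieltjes coefficients $d_n=\int_0^1\cos(2\pi nx)\,d?(x)$ tend to zero (note $\int_0^1\sin(2\pi nx)\,d?(x)=0$ for all $n$). *)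

theory Defs
  imports "HOL-Analysis.Analysis"
begin

text \<open>Continued fraction remainders via the Gauss map:
  cf_rem 0 x = x, cf_rem (n+1) x = frac (1 / cf_rem n x) (with frac (1/0) = 0,
  so the sequence becomes 0 once the expansion terminates).
  For x in (0,1], the i-th partial quotient a_(i+1) is floor (1 / cf_rem i x),
  provided cf_rem i x is nonzero.\<close>

fun cf_rem :: "nat \<Rightarrow> real \<Rightarrow> real" where
  "cf_rem 0 x = x"
| "cf_rem (Suc n) x = frac (1 / cf_rem n x)"

definition cf_digit :: "nat \<Rightarrow> real \<Rightarrow> int" where
  "cf_digit i x = \<lfloor>1 / cf_rem i x\<rfloor>"

text \<open>Minkowski question mark function:
  ?(x) = 2 * sum_{i>=1} (-1)^(i+1) 2^(-(a_1+...+a_i)), with ?(0)=0, ?(1)=1;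
  extended by 0 to the left of 0 and by 1 to the right of 1 (so that it is a
  distribution function whose Stieltjes measure lives on [0,1]).\<close>

definition minkowski_q :: "real \<Rightarrow> real" where
  "minkowski_q x =
     (if x \<le> 0 then 0 else if 1 \<le> x then 1 else
      (\<Sum>i. if cf_rem i x \<noteq> 0
             then 2 * (-1) ^ i * 2 powr (- real_of_int (\<Sum>j\<le>i. cf_digit j x))
             else 0))"

definition minkowski_measure :: "real measure" where
  "minkowski_measure = interval_measure minkowski_q"

end

theory Submission
  imports Defs "HOL-Probability.Probability"
begin


definition qT :: "real \<Rightarrow> nat \<Rightarrow> real" where
 "qT z i = (if cf_rem i z \<noteq> 0
             then 2 * (-1) ^ i * 2 powr (- real_of_int (\<Sum>j\<le>i. cf_digit j z))
             else 0)"

lemma cf_rem_range: "0 \<le> x \<Longrightarrow> x < 1 \<Longrightarrow> 0 \<le> cf_rem i x \<and> cf_rem i x < 1"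
  by (cases i) (auto simp: frac_lt_1)

lemma cf_rem_zero_Suc: "cf_rem i x = 0 \<Longrightarrow> cf_rem (Suc i) x = 0"
  by simp

declare cf_rem.simps(2)[simp del]

lemma mq_eq: "0 < x \<Longrightarrow> x < 1 \<Longrightarrow> minkowski_q x = suminf (qT x)"
  by (simp add: minkowski_q_def qT_def[abs_def])

lemma cf_rem_nz_le: "cf_rem i x \<noteq> 0 \<Longrightarrow> j \<le> i \<Longrightarrow> cf_rem j x \<noteq> 0"
proof (induction i)
  case 0 then show ?case by simp
next
  case (Suc i) then show ?case
    by (metis cf_rem_zero_Suc le_Suc_eq)
qed

lemma cf_digit_ge1: "0 \<le> x \<Longrightarrow> x < 1 \<Longrightarrow> cf_rem j x \<noteq> 0 \<Longrightarrow> cf_digit j x \<ge> 1"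
proof -
  assume a: "0 \<le> x" "x < 1" "cf_rem j x \<noteq> 0"
  then have "0 < cf_rem j x" "cf_rem j x < 1" using cf_rem_range[of x j] by auto
  then have "1 / cf_rem j x \<ge> 1" by simp
  then show ?thesis unfolding cf_digit_def by (simp add: le_floor_iff)
qed

lemma qT_bound: "0 \<le> x \<Longrightarrow> x < 1 \<Longrightarrow> norm (qT x i) \<le> (1/2)^i"
proof (cases "cf_rem i x = 0")
  case True then show ?thesis by (simp add: qT_def)
next
  case False
  assume a: "0 \<le> x" "x < 1"
  have "\<forall>j\<le>i. cf_digit j x \<ge> 1" using cf_digit_ge1[OF a] cf_rem_nz_le[OF False] by blast
  then have "(\<Sum>j\<le>i. cf_digit j x) \<ge> (\<Sum>j\<le>i. 1)" by (intro sum_mono) auto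
  then have "(\<Sum>j\<le>i. cf_digit j x) \<ge> int i + 1" by simp
  then have "real_of_int (\<Sum>j\<le>i. cf_digit j x) \<ge> real_of_int (int i + 1)" by (simp only: of_int_le_iff)
  then have S: "real_of_int (\<Sum>j\<le>i. cf_digit j x) \<ge> real i + 1" by simp
  have "norm (qT x i) = 2 * 2 powr (- real_of_int (\<Sum>j\<le>i. cf_digit j x))"
    using False by (simp add: abs_mult qT_def)
  also have "\<dots> \<le> 2 * 2 powr (- (real i + 1))"
    using S by simp
  also have "\<dots> = (1/2)^i"
  proof -
    have "2 powr (real i + 1) = 2^Suc i" using powr_realpow[of 2 "Suc i"] by (simp add: add.commute)
    then have "2 powr (- (real i + 1)) = inverse (2 ^ Suc i)" by (simp only: powr_minus)
    then show ?thesis by (simp add: power_one_over field_simps)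
  qed
  finally show ?thesis .
qed

lemma qT_summable: "0 \<le> x \<Longrightarrow> x < 1 \<Longrightarrow> summable (qT x)"
  by (rule summable_comparison_test[OF _ summable_geometric[of "1/2::real"]])
     (use qT_bound in auto)

lemma mq_shift:
  assumes x: "0 < x" "x < 1/2"
  shows "minkowski_q (1 - x) = 1 - minkowski_q x"
proof -
  define y where "y = 1 - x"
  have y: "1/2 < y" "y < 1" using x by (auto simp: y_def)
  have fl1: "\<lfloor>1 / y\<rfloor> = 1"
    using y by (intro floor_unique) (auto simp: field_simps)
  have r1: "cf_rem (Suc 0) y = x / (1 - x)"
  proof -
    have "cf_rem (Suc 0) y = frac (1 / y)" by (simp add: cf_rem.simps)
    also have "\<dots> = 1/y - 1" using fl1 by (simp add: frac_def)
    also have "\<dots> = x / (1-x)" using x by (simp add: y_def field_simps)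
    finally show ?thesis .
  qed
  have inv: "1 / (x / (1 - x)) = 1/x - 1" using x by (simp add: field_simps)
  have r2: "cf_rem (Suc (Suc i)) y = cf_rem (Suc i) x" for i
  proof (induction i)
    case 0
    have "cf_rem (Suc (Suc 0)) y = frac (1 / cf_rem (Suc 0) y)" by (rule cf_rem.simps(2))
    also have "\<dots> = frac (1/x - 1)" by (simp only: r1 inv)
    also have "\<dots> = frac (1/x)" by (simp add: frac_def)
    finally show ?case by (simp add: cf_rem.simps)
  next
    case (Suc i) then show ?case by (simp add: cf_rem.simps)
  qed
  have d0y: "cf_digit 0 y = 1" using fl1 by (simp add: cf_digit_def)
  have d1y: "cf_digit (Suc 0) y = cf_digit 0 x - 1"
  proof -
    have "cf_digit (Suc 0) y = \<lfloor>1 / cf_rem (Suc 0) y\<rfloor>" by (simp only: cf_digit_def)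
    also have "\<dots> = \<lfloor>1/x - 1\<rfloor>" by (simp only: r1 inv)
    also have "\<dots> = \<lfloor>1/x\<rfloor> - 1" by simp
    finally show ?thesis by (simp add: cf_digit_def)
  qed
  have dS: "cf_digit (Suc (Suc i)) y = cf_digit (Suc i) x" for i
    using r2[of i] by (simp add: cf_digit_def)
  have sums: "(\<Sum>j\<le>Suc i. cf_digit j y) = (\<Sum>j\<le>i. cf_digit j x)" for i
  proof (induction i)
    case 0 then show ?case using d0y d1y by simp
  next
    case (Suc i) then show ?case using dS[of i] by simp
  qed
  have nz: "(cf_rem (Suc i) y \<noteq> 0) = (cf_rem i x \<noteq> 0)" for i
  proof (cases i)
    case 0 then show ?thesis using x by (simp add: r1[simplified])
  next
    case (Suc j) then show ?thesis using r2[of j] by simp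
  qed
  have TS: "qT y (Suc i) = - qT x i" for i
    using nz[of i] sums[of i] by (simp add: qT_def)
  have T0: "qT y 0 = 1"
    using y d0y by (simp add: powr_minus qT_def)
  have sy: "summable (qT y)" using y by (intro qT_summable) auto
  have "minkowski_q y = suminf (qT y)" using y by (simp add: mq_eq)
  also have "\<dots> = qT y 0 + (\<Sum>i. qT y (Suc i))"
    using suminf_split_head[OF sy] by simp
  also have "\<dots> = 1 - suminf (qT x)"
  proof -
    have "summable (qT x)" using x by (intro qT_summable) auto
    then have "(\<Sum>i. - qT x i) = - suminf (qT x)" by (rule suminf_minus)
    then show ?thesis by (simp add: TS T0)
  qed
  also have "suminf (qT x) = minkowski_q x" using x by (simp add: mq_eq)
  finally show ?thesis by (simp add: y_def)
qed

lemma mq_half: "minkowski_q (1/2) = 1/2"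
proof -
  have r1: "cf_rem (Suc i) (1/2) = 0" for i
  proof (induction i)
    case 0 then show ?case by (simp add: cf_rem.simps)
  next
    case (Suc i)
    have eq: "cf_rem (Suc (Suc i)) (1/2) = frac (1 / cf_rem (Suc i) (1/2))" by (rule cf_rem.simps(2))
    show ?case by (simp only: eq Suc.IH) simp
  qed
  have d0: "cf_digit 0 (1/2) = 2" by (simp add: cf_digit_def)
  have "qT (1/2) = (\<lambda>i. if i = 0 then 1/2 else 0)"
  proof
    fix i show "qT (1/2) i = (if i = 0 then 1/2 else 0)"
      by (cases i) (auto simp: r1 d0 powr_minus qT_def)
  qed
  then have "qT (1/2) sums (1/2)" using sums_single[of 0 "\<lambda>_. 1/2::real"] by simp
  then show ?thesis by (simp add: mq_eq sums_iff)
qed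

lemma mq_sym: "minkowski_q (1 - x) = 1 - minkowski_q x"
proof -
  consider "x \<le> 0" | "1 \<le> x" | "0 < x" "x < 1/2" | "x = 1/2" | "1/2 < x" "x < 1" by linarith
  then show ?thesis
  proof cases
    case 5
    then have "minkowski_q (1 - (1 - x)) = 1 - minkowski_q (1 - x)" by (intro mq_shift) auto
    then show ?thesis by simp
  next
    case 3 then show ?thesis by (rule mq_shift)
  next
    case 4 then show ?thesis by (simp only: 4) (simp add: mq_half)
  qed (auto simp: minkowski_q_def)
qed


definition ee :: "int \<Rightarrow> real \<Rightarrow> complex" where
  "ee m x = exp (\<i> * complex_of_real (2 * pi * real_of_int m * x))"

lemma ee_mult: "ee m x * ee n x = ee (m + n) x"
  by (simp add: ee_def exp_add[symmetric] algebra_simps)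

lemma norm_ee [simp]: "norm (ee m x) = 1"
  by (simp add: ee_def norm_exp_i_times)

lemma cont_ee [continuous_intros]: "continuous_on A (ee m)"
  unfolding ee_def by (intro continuous_intros)

inductive trigpoly :: "(real \<Rightarrow> complex) \<Rightarrow> bool" where
  base: "trigpoly (\<lambda>x. c * ee m x)"
| add: "trigpoly f \<Longrightarrow> trigpoly g \<Longrightarrow> trigpoly (\<lambda>x. f x + g x)"

lemma trigpoly_const: "trigpoly (\<lambda>x. c)"
  using trigpoly.base[of c 0] by (simp add: ee_def)

lemma trigpoly_cont: "trigpoly f \<Longrightarrow> continuous_on A f"
  by (induction rule: trigpoly.induct) (auto intro!: continuous_intros)

lemma trigpoly_mult_base: "trigpoly g \<Longrightarrow> trigpoly (\<lambda>x. (c * ee m x) * g x)"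
proof (induction rule: trigpoly.induct)
  case (base d n)
  have "(\<lambda>x. c * ee m x * (d * ee n x)) = (\<lambda>x. (c*d) * ee (m+n) x)"
    by (auto simp: ee_mult[symmetric] algebra_simps)
  then show ?case by (simp add: trigpoly.base)
next
  case (add f g)
  then show ?case by (simp add: distrib_left trigpoly.add)
qed

lemma trigpoly_mult: "trigpoly f \<Longrightarrow> trigpoly g \<Longrightarrow> trigpoly (\<lambda>x. f x * g x)"
proof (induction rule: trigpoly.induct)
  case (base c m) then show ?case by (rule trigpoly_mult_base)
next
  case (add f1 f2)
  then show ?case by (simp add: distrib_right trigpoly.add)
qed

lemma trigpoly_cos: "trigpoly (\<lambda>x. complex_of_real (cos (2*pi*x)))"
proof -
  have "(\<lambda>x. complex_of_real (cos (2*pi*x))) = (\<lambda>x. (1/2) * ee 1 x + (1/2) * ee (-1) x)"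
    by (auto simp: ee_def cos_of_real[symmetric] cos_exp_eq field_simps)
  then show ?thesis by (simp only:) (intro trigpoly.add trigpoly.base)
qed

lemma trigpoly_sin: "trigpoly (\<lambda>x. complex_of_real (sin (2*pi*x)))"
proof -
  have "(\<lambda>x. complex_of_real (sin (2*pi*x))) = (\<lambda>x. (-\<i>/2) * ee 1 x + (\<i>/2) * ee (-1) x)"
    by (auto simp: ee_def sin_of_real[symmetric] sin_exp_eq' field_simps)
  then show ?thesis by (simp only:) (intro trigpoly.add trigpoly.base)
qed

definition circ :: "real \<Rightarrow> complex" where
  "circ x = exp (\<i> * complex_of_real (2 * pi * x))"

lemma bounded_linear_complex_decomp:
  assumes "bounded_linear f"
  shows "f z = Re z *\<^sub>R f 1 + Im z *\<^sub>R f \<i>"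
proof -
  interpret linear f using assms by (rule bounded_linear.linear)
  have "z = Re z *\<^sub>R 1 + Im z *\<^sub>R \<i>" by (simp add: complex_eq_iff)
  then have "f z = f (Re z *\<^sub>R 1 + Im z *\<^sub>R \<i>)" by simp
  also have "\<dots> = Re z *\<^sub>R f 1 + Im z *\<^sub>R f \<i>" by (simp add: add scale)
  finally show ?thesis .
qed

lemma trigpoly_realpoly:
  "real_polynomial_function q \<Longrightarrow> trigpoly (\<lambda>x. complex_of_real (q (circ x)))"
proof (induction rule: real_polynomial_function.induct)
  case (linear f)
  have "(\<lambda>x. complex_of_real (f (circ x))) =
        (\<lambda>x. complex_of_real (f 1) * complex_of_real (cos (2*pi*x)) + complex_of_real (f \<i>) * complex_of_real (sin (2*pi*x)))"
  proof
    fix x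
    have "Re (circ x) = cos (2*pi*x)" "Im (circ x) = sin (2*pi*x)"
      by (simp_all add: circ_def Re_exp Im_exp)
    then show "complex_of_real (f (circ x)) = complex_of_real (f 1) * complex_of_real (cos (2*pi*x)) + complex_of_real (f \<i>) * complex_of_real (sin (2*pi*x))"
      using bounded_linear_complex_decomp[OF linear, of "circ x"] by (simp add: algebra_simps)
  qed
  then show ?case
    by (simp add: trigpoly.add trigpoly_mult trigpoly_const trigpoly_cos trigpoly_sin)
next
  case (const c) then show ?case by (simp add: trigpoly_const)
next
  case (add f g) then show ?case by (simp add: trigpoly.add)
next
  case (mult f g) then show ?case by (simp add: trigpoly_mult)
qed

lemma trigpoly_poly:
  assumes "polynomial_function p"
  shows "trigpoly (\<lambda>x. p (circ x))"
proof -
  have re: "real_polynomial_function (Re \<circ> p)" and im: "real_polynomial_function (Im \<circ> p)"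
    using assms unfolding polynomial_function_def by (auto intro: bounded_linear_Re bounded_linear_Im)
  have "(\<lambda>x. p (circ x)) = (\<lambda>x. complex_of_real ((Re \<circ> p) (circ x)) + \<i> * complex_of_real ((Im \<circ> p) (circ x)))"
    by (auto simp: complex_eq_iff)
  then show ?thesis
    using trigpoly_realpoly[OF re] trigpoly_realpoly[OF im]
    by (simp only:) (intro trigpoly.add trigpoly_mult trigpoly_const)
qed

definition Aset :: "real \<Rightarrow> real set" where
  "Aset d = {x. cmod (circ x - 1) < d}"

lemma norm_circ [simp]: "norm (circ x) = 1"
  by (simp add: circ_def norm_exp_i_times)

lemma Arg2pi_circ: "0 \<le> x \<Longrightarrow> x < 1 \<Longrightarrow> Arg2pi (circ x) = 2*pi*x"
  by (rule Arg2pi_unique[of 1]) (auto simp: circ_def)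

lemma circ_1 [simp]: "circ 1 = 1"
  by (simp add: circ_def exp_eq_1)

lemma approx_trig:
  fixes u e d :: real and k :: nat
  assumes e: "e > 0" and d: "d > 0"
  shows "\<exists>P. trigpoly P \<and> (\<forall>x\<in>{0..1}.
     cmod ((\<i> * complex_of_real x)^k * exp (\<i> * complex_of_real (2*pi*u*x)) - P x)
        \<le> e + 2 * indicator (Aset d) x)"
proof -
  define a where "a z = Arg2pi z / (2*pi)" for z
  define c where "c z = min 1 (cmod (z - 1) / d)" for z
  define g where "g z = (\<i> * complex_of_real (a z))^k * exp (\<i> * complex_of_real (2*pi*u*a z)) * complex_of_real (c z)" for z
  have a01: "0 \<le> a z \<and> a z < 1" for z
    using Arg2pi[of z] by (auto simp: a_def field_simps)
  have c01: "0 \<le> c z \<and> c z \<le> 1" for z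
    using d by (auto simp: c_def)
  have ak: "norm ((\<i> * complex_of_real (a z))^k) \<le> 1" for z
    using a01[of z] by (simp add: norm_power norm_mult power_le_one)
  have gbound: "norm (g z) \<le> cmod (z - 1) / d" for z
  proof -
    have "norm (g z) = norm ((\<i> * complex_of_real (a z))^k) * \<bar>c z\<bar>"
      by (simp add: g_def norm_mult norm_exp_i_times)
    also have "\<dots> \<le> 1 * \<bar>c z\<bar>" by (intro mult_right_mono ak) auto
    also have "\<dots> \<le> cmod (z - 1) / d" using c01[of z] by (simp add: c_def)
    finally show ?thesis .
  qed
  have g1: "g 1 = 0" by (simp add: g_def c_def)
  have cont: "continuous_on (sphere 0 1) g"
  proof (clarsimp simp: continuous_on_eq_continuous_within)
    fix z :: complex assume z: "cmod z = 1"
    show "continuous (at z within sphere 0 1) g"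
    proof (cases "z = 1")
      case True
      have "(g \<longlongrightarrow> 0) (at 1 within sphere 0 1)"
      proof (rule Lim_null_comparison)
        show "\<forall>\<^sub>F w in at 1 within sphere 0 1. norm (g w) \<le> cmod (w - 1) / d"
          using gbound by simp
        have "((\<lambda>w. cmod (w - 1) / d) \<longlongrightarrow> cmod (1 - 1) / d) (at 1 within sphere 0 1)"
          using d by (intro tendsto_intros) auto
        then show "((\<lambda>w. cmod (w - 1) / d) \<longlongrightarrow> 0) (at 1 within sphere 0 1)" by simp
      qed
      then show ?thesis using True g1 by (simp add: continuous_within)
    next
      case False
      have "z \<notin> \<real>\<^sub>\<ge>\<^sub>0"
      proof
        assume "z \<in> \<real>\<^sub>\<ge>\<^sub>0"
        then obtain r where "r \<ge> 0" "z = complex_of_real r" by (auto simp: nonneg_Reals_def)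
        with z False show False by simp
      qed
      then have ca: "continuous (at z) Arg2pi" by (rule continuous_at_Arg2pi)
      have "continuous (at z) g"
        unfolding g_def a_def c_def using d by (intro continuous_intros ca) auto
      then show ?thesis by (rule continuous_at_imp_continuous_within)
    qed
  qed
  obtain p where p: "polynomial_function p" and pa: "\<And>z. z \<in> sphere 0 1 \<Longrightarrow> norm (g z - p z) < e"
    using Stone_Weierstrass_polynomial_function[OF compact_sphere cont e] by blast
  define P where "P x = p (circ x)" for x
  have tP: "trigpoly P" unfolding P_def by (rule trigpoly_poly[OF p])
  have "cmod ((\<i> * complex_of_real x)^k * exp (\<i> * complex_of_real (2*pi*u*x)) - P x)
        \<le> e + 2 * indicator (Aset d) x" if x: "x \<in> {0..1}" for x
  proof -
    define psi where "psi = (\<i> * complex_of_real x)^k * exp (\<i> * complex_of_real (2*pi*u*x))"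
    have npsi: "norm psi \<le> 1"
      using x by (simp add: psi_def norm_mult norm_power norm_exp_i_times power_le_one)
    have cs: "circ x \<in> sphere 0 1" by simp
    have pe: "norm (g (circ x) - P x) < e" using pa[OF cs] by (simp add: P_def)
    show ?thesis
    proof (cases "x = 1")
      case True
      have "norm (P 1) < e" using pe True g1 by simp
      moreover have "1 \<in> Aset d" using d by (simp add: Aset_def)
      ultimately have "norm (psi - P 1) \<le> e + 2 * indicator (Aset d) 1"
        using npsi norm_triangle_ineq4[of psi "P 1"] by simp
      then show ?thesis using True by (simp add: psi_def)
    next
      case False
      then have x1: "0 \<le> x" "x < 1" using x by auto
      have ax: "a (circ x) = x" using Arg2pi_circ[OF x1] by (simp add: a_def)
      have gx: "g (circ x) = psi * complex_of_real (c (circ x))"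
        by (simp add: g_def ax psi_def)
      have "norm (psi - P x) \<le> norm (psi - g (circ x)) + norm (g (circ x) - P x)"
        using norm_triangle_ineq[of "psi - g (circ x)" "g (circ x) - P x"] by simp
      also have "norm (psi - g (circ x)) = norm psi * \<bar>1 - c (circ x)\<bar>"
      proof -
        have "psi - g (circ x) = psi * complex_of_real (1 - c (circ x))" by (simp add: gx algebra_simps)
        then show ?thesis by (simp only: norm_mult norm_of_real)
      qed
      also have "norm psi * \<bar>1 - c (circ x)\<bar> \<le> 2 * indicator (Aset d) x"
      proof (cases "x \<in> Aset d")
        case True
        have "norm psi * \<bar>1 - c (circ x)\<bar> \<le> 1 * 1"
          using npsi c01[of "circ x"] by (intro mult_mono) auto
        then show ?thesis using True by simp
      next
        case False
        then have "c (circ x) = 1" using d by (simp add: Aset_def c_def)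
        then show ?thesis by simp
      qed
      finally show ?thesis using pe by (simp add: psi_def)
    qed
  qed
  then show ?thesis using tP by blast
qed


lemma Aset_borel [measurable]: "Aset d \<in> sets borel"
proof -
  have "open (Aset d)" unfolding Aset_def circ_def
    by (intro open_Collect_less continuous_intros)
  then show ?thesis by simp
qed

lemma norm_iexp_diff: "cmod (exp (\<i> * complex_of_real a) - exp (\<i> * complex_of_real b)) \<le> \<bar>a - b\<bar>"
proof -
  have "cmod (iexp (a - b) - 1) \<le> \<bar>a - b\<bar>"
    using iexp_approx1[of "a - b" 0] by simp
  moreover have "exp (\<i> * complex_of_real a) - exp (\<i> * complex_of_real b) =
      exp (\<i> * complex_of_real b) * (iexp (a - b) - 1)"
    by (simp add: algebra_simps exp_add[symmetric])
  ultimately show ?thesis by (simp add: norm_mult norm_exp_i_times)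
qed

context
  fixes N :: "real measure"
  assumes probN: "prob_space N"
    and setsN [measurable_cong]: "sets N = sets borel"
begin

interpretation prob_space N by (rule probN)

lemma intble:
  fixes f :: "real \<Rightarrow> complex"
  assumes "continuous_on UNIV f"
  shows "integrable N (\<lambda>x. indicator {0..1} x *\<^sub>R f x)"
proof -
  have fm[measurable]: "f \<in> borel_measurable borel" using assms by (rule borel_measurable_continuous_onI)
  have "compact (f ` {0..1})" using assms by (intro compact_continuous_image continuous_on_subset[OF assms]) auto
  then obtain B where B: "\<And>x. x \<in> {0..1} \<Longrightarrow> norm (f x) \<le> B"
    using compact_imp_bounded bounded_iff by (metis image_eqI)
  show ?thesis
  proof (rule integrable_const_bound[where B = "\<bar>B\<bar>"])
    show "AE x in N. norm (indicator {0..1} x *\<^sub>R f x) \<le> \<bar>B\<bar>"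
      using B by (auto simp: indicator_def intro!: AE_I2) (smt (verit) B)
  qed measurable
qed

lemma trig_decay:
  assumes dec: "\<And>e. e > 0 \<Longrightarrow> \<exists>K. \<forall>m::int. \<bar>m\<bar> \<ge> K \<longrightarrow>
       cmod (integral\<^sup>L N (\<lambda>x. indicator {0..1} x *\<^sub>R ee m x)) < e"
  shows "trigpoly P \<Longrightarrow> e > 0 \<Longrightarrow> \<exists>K. \<forall>n::int. \<bar>n\<bar> \<ge> K \<longrightarrow>
       cmod (integral\<^sup>L N (\<lambda>x. indicator {0..1} x *\<^sub>R (P x * ee n x))) < e"
proof (induction arbitrary: e rule: trigpoly.induct)
  case (base c m)
  show ?case
  proof (cases "c = 0")
    case True then show ?thesis using base by simp
  next
    case False
    then have cp: "cmod c > 0" by simp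
    obtain K0 where K0: "\<And>m'::int. \<bar>m'\<bar> \<ge> K0 \<Longrightarrow>
       cmod (integral\<^sup>L N (\<lambda>x. indicator {0..1} x *\<^sub>R ee m' x)) < e / cmod c"
      using dec[of "e / cmod c"] base cp by auto
    have "cmod (integral\<^sup>L N (\<lambda>x. indicator {0..1} x *\<^sub>R (c * ee m x * ee n x))) < e"
      if n: "\<bar>n\<bar> \<ge> K0 + \<bar>m\<bar>" for n
    proof -
      have "\<bar>m + n\<bar> \<ge> K0" using n by linarith
      then have lt: "cmod (integral\<^sup>L N (\<lambda>x. indicator {0..1} x *\<^sub>R ee (m+n) x)) < e / cmod c" by (rule K0)
      have "(\<lambda>x. indicator {0..1} x *\<^sub>R (c * ee m x * ee n x)) = (\<lambda>x. c * (indicator {0..1} x *\<^sub>R ee (m+n) x))"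
        by (rule ext) (simp add: ee_mult[symmetric] scaleR_conv_of_real algebra_simps)
      then have "cmod (integral\<^sup>L N (\<lambda>x. indicator {0..1} x *\<^sub>R (c * ee m x * ee n x))) =
          cmod c * cmod (integral\<^sup>L N (\<lambda>x. indicator {0..1} x *\<^sub>R ee (m+n) x))"
        by (simp only: integral_mult_right_zero norm_mult)
      also have "\<dots> < cmod c * (e / cmod c)" using lt cp by (intro mult_strict_left_mono) auto
      also have "\<dots> = e" using cp by simp
      finally show ?thesis .
    qed
    then show ?thesis by blast
  qed
next
  case (add f g)
  have e2: "e/2 > 0" using add by simp
  obtain K1 where K1: "\<And>n::int. \<bar>n\<bar> \<ge> K1 \<Longrightarrow> cmod (integral\<^sup>L N (\<lambda>x. indicator {0..1} x *\<^sub>R (f x * ee n x))) < e/2"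
    using add.IH(1)[OF e2] by auto
  obtain K2 where K2: "\<And>n::int. \<bar>n\<bar> \<ge> K2 \<Longrightarrow> cmod (integral\<^sup>L N (\<lambda>x. indicator {0..1} x *\<^sub>R (g x * ee n x))) < e/2"
    using add.IH(2)[OF e2] by auto
  have "cmod (integral\<^sup>L N (\<lambda>x. indicator {0..1} x *\<^sub>R ((f x + g x) * ee n x))) < e"
    if n: "\<bar>n\<bar> \<ge> max K1 K2" for n
  proof -
    have i1: "integrable N (\<lambda>x. indicator {0..1} x *\<^sub>R (f x * ee n x))"
      using add.hyps(1) by (intro intble continuous_intros trigpoly_cont)
    have i2: "integrable N (\<lambda>x. indicator {0..1} x *\<^sub>R (g x * ee n x))"
      using add.hyps(2) by (intro intble continuous_intros trigpoly_cont)
    have "(\<lambda>x. indicator {0..1} x *\<^sub>R ((f x + g x) * ee n x)) =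
       (\<lambda>x. indicator {0..1} x *\<^sub>R (f x * ee n x) + indicator {0..1} x *\<^sub>R (g x * ee n x))"
      by (auto simp: algebra_simps)
    then have "integral\<^sup>L N (\<lambda>x. indicator {0..1} x *\<^sub>R ((f x + g x) * ee n x)) =
       integral\<^sup>L N (\<lambda>x. indicator {0..1} x *\<^sub>R (f x * ee n x)) + integral\<^sup>L N (\<lambda>x. indicator {0..1} x *\<^sub>R (g x * ee n x))"
      using Bochner_Integration.integral_add[OF i1 i2] by simp
    moreover have "cmod (integral\<^sup>L N (\<lambda>x. indicator {0..1} x *\<^sub>R (f x * ee n x))) < e/2" using n K1 by auto
    moreover have "cmod (integral\<^sup>L N (\<lambda>x. indicator {0..1} x *\<^sub>R (g x * ee n x))) < e/2" using n K2 by auto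
    ultimately show ?thesis using norm_triangle_ineq[of "integral\<^sup>L N (\<lambda>x. indicator {0..1} x *\<^sub>R (f x * ee n x))"
         "integral\<^sup>L N (\<lambda>x. indicator {0..1} x *\<^sub>R (g x * ee n x))"] by simp
  qed
  then show ?case by blast
qed

lemma small_A:
  assumes at0: "emeasure N {0} = 0" and at1: "emeasure N {1} = 0" and eta: "eta > 0"
  shows "\<exists>d>0. measure N ({0..1} \<inter> Aset d) < eta"
proof -
  define B where "B m = {0..1} \<inter> Aset (1 / Suc m)" for m :: nat
  have "B m \<in> sets N" for m
    unfolding B_def setsN by (intro sets.Int Aset_borel) simp
  then have rng: "range B \<subseteq> sets N" by blast
  have dec: "decseq B"
  proof (rule decseq_SucI)
    fix m
    have "1 / real (Suc (Suc m)) \<le> 1 / real (Suc m)" by (simp add: frac_le)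
    then show "B (Suc m) \<subseteq> B m" by (auto simp: B_def Aset_def)
  qed
  have lim: "(\<lambda>m. measure N (B m)) \<longlonglongrightarrow> measure N (\<Inter>m. B m)"
    by (rule finite_Lim_measure_decseq[OF rng dec])
  have sub: "(\<Inter>m. B m) \<subseteq> {0,1}"
  proof
    fix x assume x: "x \<in> (\<Inter>m. B m)"
    then have x01: "0 \<le> x" "x \<le> 1" by (auto simp: B_def)
    have small: "\<And>m. cmod (circ x - 1) < 1 / Suc m" using x by (auto simp: B_def Aset_def)
    have "circ x = 1"
    proof (rule ccontr)
      assume "circ x \<noteq> 1"
      then have "cmod (circ x - 1) > 0" by simp
      then obtain n :: nat where n: "n > 0" "inverse (real n) < cmod (circ x - 1)"
        using ex_inverse_of_nat_less by blast
      then obtain m where "n = Suc m" by (cases n) auto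
      with n small[of m] show False by (simp add: inverse_eq_divide)
    qed
    then obtain j :: int where j: "2 * pi * x = of_int (2 * j) * pi"
      unfolding circ_def exp_eq_1 by auto
    then have "x = of_int j" by (simp add: field_simps)
    with x01 have "0 \<le> j" "j \<le> 1" by auto
    then have "j = 0 \<or> j = 1" by linarith
    then show "x \<in> {0,1}" using \<open>x = of_int j\<close> by auto
  qed
  have "emeasure N {0,1} \<le> emeasure N {0} + emeasure N {1}"
    using emeasure_subadditive[of "{0}" N "{1}"] setsN by (auto simp: insert_commute)
  then have "emeasure N {0,1} = 0" using at0 at1 by simp
  then have m01: "measure N {0,1} = 0" by (simp add: measure_def)
  have "measure N (\<Inter>m. B m) \<le> measure N {0,1}"
    by (rule finite_measure_mono[OF sub]) (use setsN in simp)
  then have "measure N (\<Inter>m. B m) = 0" using m01 measure_nonneg[of N] by (metis order_antisym)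
  with lim have "\<forall>\<^sub>F m in sequentially. measure N (B m) < eta"
    using eta by (intro order_tendstoD(2)) simp_all
  then obtain m where "measure N (B m) < eta" unfolding eventually_sequentially by blast
  then show ?thesis by (intro exI[of _ "1 / Suc m"]) (auto simp: B_def)
qed

lemma main_decay:
  fixes k :: nat
  assumes at0: "emeasure N {0} = 0" and at1: "emeasure N {1} = 0"
    and dec: "\<And>e. e > 0 \<Longrightarrow> \<exists>K. \<forall>m::int. \<bar>m\<bar> \<ge> K \<longrightarrow>
       cmod (integral\<^sup>L N (\<lambda>x. indicator {0..1} x *\<^sub>R ee m x)) < e"
    and e: "e > 0"
  shows "\<exists>R. \<forall>t. \<bar>t\<bar> \<ge> R \<longrightarrow>
     cmod (integral\<^sup>L N (\<lambda>x. indicator {0..1} x *\<^sub>R ((\<i> * complex_of_real x)^k * exp (\<i> * complex_of_real (t*x))))) < e"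
proof -
  define e8 where "e8 = e / 8"
  have e8: "e8 > 0" using e by (simp add: e8_def)
  define psi where "psi u x = (\<i> * complex_of_real x)^k * exp (\<i> * complex_of_real (2*pi*u*x))" for u x :: real
  have spaceN: "space N = UNIV" using sets_eq_imp_space_eq[OF setsN] by simp
  obtain d where d: "d > 0" "measure N ({0..1} \<inter> Aset d) < e8"
    using small_A[OF at0 at1 e8] by blast
  define J :: nat where "J = nat \<lceil>2*pi/e8\<rceil> + 1"
  have J0: "J > 0" by (simp add: J_def)
  have J: "2*pi / J < e8"
  proof -
    have "real (nat \<lceil>2*pi/e8\<rceil>) \<ge> 2*pi/e8" by (rule real_nat_ceiling_ge)
    then have "2*pi/e8 < J" unfolding J_def by simp
    then have "2*pi < e8 * J" using e8 by (simp add: field_simps)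
    then show ?thesis using J0 by (simp add: field_simps)
  qed
  have "\<forall>j::nat. \<exists>P. trigpoly P \<and> (\<forall>x\<in>{0..1}. cmod (psi (real j / real J) x - P x) \<le> e8 + 2 * indicator (Aset d) x)"
  proof
    fix j :: nat
    show "\<exists>P. trigpoly P \<and> (\<forall>x\<in>{0..1}. cmod (psi (real j / real J) x - P x) \<le> e8 + 2 * indicator (Aset d) x)"
      using approx_trig[OF e8 d(1), where u="real j / real J" and k=k] unfolding psi_def .
  qed
  then obtain P where P: "\<And>j. trigpoly (P j)"
    "\<And>(j::nat) x. x \<in> {0..1} \<Longrightarrow> cmod (psi (real j / real J) x - P j x) \<le> e8 + 2 * indicator (Aset d) x"
    by metis
  have "\<forall>j. \<exists>K. \<forall>n::int. \<bar>n\<bar> \<ge> K \<longrightarrow> cmod (integral\<^sup>L N (\<lambda>x. indicator {0..1} x *\<^sub>R (P j x * ee n x))) < e8"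
    using trig_decay[OF dec P(1) e8] by blast
  then obtain K where K: "\<And>j n. \<bar>n\<bar> \<ge> K j \<Longrightarrow> cmod (integral\<^sup>L N (\<lambda>x. indicator {0..1} x *\<^sub>R (P j x * ee n x))) < e8"
    by metis
  define Kall where "Kall = (\<Sum>j<J. \<bar>K j\<bar>)"
  show ?thesis
  proof (intro exI[of _ "2*pi*(Kall+1)"] allI impI)
    fix t :: real assume t: "2*pi*(Kall+1) \<le> \<bar>t\<bar>"
    define n where "n = \<lfloor>t/(2*pi)\<rfloor>"
    define u where "u = t/(2*pi) - n"
    have fl: "of_int n \<le> t/(2*pi)" "t/(2*pi) < of_int n + 1" unfolding n_def by linarith+
    have u: "0 \<le> u" "u < 1" using fl by (auto simp: u_def)
    have tu: "t = 2*pi*(u + of_int n)" by (simp add: u_def)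
    have nK: "\<bar>n\<bar> \<ge> Kall"
    proof -
      have "\<bar>t\<bar>/(2*pi) \<ge> Kall + 1" using t pi_gt_zero by (simp add: field_simps)
      then have "\<bar>t/(2*pi)\<bar> \<ge> Kall + 1" by (simp add: abs_divide)
      then have "real_of_int \<bar>n\<bar> \<ge> real_of_int Kall" using fl by linarith
      then show ?thesis by (simp only: of_int_le_iff)
    qed
    define j where "j = nat \<lfloor>u * J\<rfloor>"
    have uJ0: "0 \<le> u * J" using u by simp
    have jr: "real j = of_int \<lfloor>u * J\<rfloor>" unfolding j_def using uJ0 by simp
    have jfl: "real j \<le> u * J" "u * J < real j + 1" using jr by linarith+
    have jJ: "j < J"
    proof -
      have "u * J < J" using u J0 by simp
      then have "real j < J" using jfl by linarith
      then show ?thesis by simp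
    qed
    have ju: "\<bar>u - real j / real J\<bar> \<le> 1/J"
    proof -
      have "\<bar>u * J - j\<bar> \<le> 1" using jfl by linarith
      then have "\<bar>u - real j / real J\<bar> * J \<le> 1" using J0 by (simp add: abs_mult[symmetric] left_diff_distrib field_simps)
      then show ?thesis using J0 by (simp add: field_simps)
    qed
    have Kj: "\<bar>n\<bar> \<ge> K j"
    proof -
      have "\<bar>K j\<bar> \<le> Kall" unfolding Kall_def using jJ by (intro member_le_sum) auto
      then show ?thesis using nK by linarith
    qed
    have cpsi: "continuous_on UNIV (psi v)" for v unfolding psi_def by (intro continuous_intros)
    have i1: "integrable N (\<lambda>x. indicator {0..1} x *\<^sub>R ((psi u x - P j x) * ee n x))"
      by (intro intble continuous_intros cpsi trigpoly_cont[OF P(1)])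
    have i2: "integrable N (\<lambda>x. indicator {0..1} x *\<^sub>R (P j x * ee n x))"
      by (intro intble continuous_intros trigpoly_cont[OF P(1)])
    have "(\<lambda>x. indicator {0..1} x *\<^sub>R ((\<i> * complex_of_real x)^k * exp (\<i> * complex_of_real (t*x)))) =
       (\<lambda>x. indicator {0..1} x *\<^sub>R ((psi u x - P j x) * ee n x) + indicator {0..1} x *\<^sub>R (P j x * ee n x))"
    proof
      fix x
      have "exp (\<i> * complex_of_real (t*x)) = exp (\<i> * complex_of_real (2*pi*u*x)) * ee n x"
        unfolding ee_def by (simp add: exp_add[symmetric] tu algebra_simps)
      then show "indicator {0..1} x *\<^sub>R ((\<i> * complex_of_real x)^k * exp (\<i> * complex_of_real (t*x))) =
        indicator {0..1} x *\<^sub>R ((psi u x - P j x) * ee n x) + indicator {0..1} x *\<^sub>R (P j x * ee n x)"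
        by (simp add: psi_def algebra_simps)
    qed
    then have split: "integral\<^sup>L N (\<lambda>x. indicator {0..1} x *\<^sub>R ((\<i> * complex_of_real x)^k * exp (\<i> * complex_of_real (t*x)))) =
       integral\<^sup>L N (\<lambda>x. indicator {0..1} x *\<^sub>R ((psi u x - P j x) * ee n x)) + integral\<^sup>L N (\<lambda>x. indicator {0..1} x *\<^sub>R (P j x * ee n x))"
      using Bochner_Integration.integral_add[OF i1 i2] by simp
    define bf where "bf x = indicator {0..1} x * (2*e8) + 2 * indicator ({0..1} \<inter> Aset d) x" for x :: real
    have ibf: "integrable N bf"
    proof (rule integrable_const_bound[where B="2*e8+2"])
      show "AE x in N. norm (bf x) \<le> 2*e8+2" using e8 by (auto simp: bf_def indicator_def)
      show "bf \<in> borel_measurable N" unfolding bf_def by measurable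
    qed
    have pw: "norm (indicator {0..1} x *\<^sub>R ((psi u x - P j x) * ee n x)) \<le> bf x" for x
    proof (cases "x \<in> {0..1}")
      case False then show ?thesis by (simp add: bf_def)
    next
      case True
      have "cmod (psi u x - psi (real j / real J) x) \<le> e8"
      proof -
        have "cmod (psi u x - psi (real j / real J) x) = cmod ((\<i> * complex_of_real x)^k) *
            cmod (exp (\<i> * complex_of_real (2*pi*u*x)) - exp (\<i> * complex_of_real (2*pi*(real j / real J)*x)))"
          by (simp add: psi_def norm_mult[symmetric] algebra_simps)
        also have "\<dots> \<le> 1 * \<bar>2*pi*u*x - 2*pi*(real j / real J)*x\<bar>"
          using True by (intro mult_mono norm_iexp_diff) (auto simp: norm_mult norm_power power_le_one)
        also have "\<dots> = 2*pi*x*\<bar>u - real j / real J\<bar>"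
        proof -
          have "2*pi*u*x - 2*pi*(real j / real J)*x = (2*pi*x) * (u - real j / real J)" by (simp add: algebra_simps)
          then show ?thesis using True by (simp add: abs_mult)
        qed
        also have "\<dots> \<le> 2*pi*1*(1/J)" using True ju by (intro mult_mono) auto
        also have "\<dots> \<le> e8" using J by simp
        finally show ?thesis .
      qed
      moreover have "cmod (psi (real j / real J) x - P j x) \<le> e8 + 2 * indicator (Aset d) x" using P(2) True by blast
      ultimately have "cmod (psi u x - P j x) \<le> 2*e8 + 2 * indicator (Aset d) x"
        using norm_triangle_ineq[of "psi u x - psi (real j / real J) x" "psi (real j / real J) x - P j x"] by simp
      then show ?thesis using True by (simp add: bf_def norm_mult indicator_def)
    qed
    have b1: "cmod (integral\<^sup>L N (\<lambda>x. indicator {0..1} x *\<^sub>R ((psi u x - P j x) * ee n x))) \<le> integral\<^sup>L N bf"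
      by (rule Bochner_Integration.integral_norm_bound_integral[OF i1 ibf pw])
    have "integral\<^sup>L N bf = 2*e8 * measure N {0..1} + 2 * measure N ({0..1} \<inter> Aset d)"
      unfolding bf_def
      by (subst Bochner_Integration.integral_add) (auto intro!: integrable_const_bound[where B=1] simp: setsN spaceN)
    also have "\<dots> \<le> 2*e8 * 1 + 2 * e8"
      using d(2) e8 by (intro add_mono mult_left_mono) auto
    finally have b2: "integral\<^sup>L N bf \<le> 4 * e8" by simp
    have b3: "cmod (integral\<^sup>L N (\<lambda>x. indicator {0..1} x *\<^sub>R (P j x * ee n x))) < e8"
      using K Kj by blast
    show "cmod (integral\<^sup>L N (\<lambda>x. indicator {0..1} x *\<^sub>R ((\<i> * complex_of_real x)^k * exp (\<i> * complex_of_real (t*x))))) < e"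
      unfolding split using b1 b2 b3 norm_triangle_ineq[of "integral\<^sup>L N (\<lambda>x. indicator {0..1} x *\<^sub>R ((psi u x - P j x) * ee n x))"
          "integral\<^sup>L N (\<lambda>x. indicator {0..1} x *\<^sub>R (P j x * ee n x))"]
      by (simp add: e8_def) (use e in linarith)
  qed
qed

end


abbreviation MM where "MM \<equiv> minkowski_measure"
abbreviation q where "q \<equiv> minkowski_q"

lemma sets_MM [simp, measurable_cong]: "sets MM = sets borel"
  by (simp add: minkowski_measure_def)

lemma space_MM [simp]: "space MM = UNIV"
  by (simp add: minkowski_measure_def)

lemma q_nonpos: "x \<le> 0 \<Longrightarrow> q x = 0" by (simp add: minkowski_q_def)
lemma q_ge1: "1 \<le> x \<Longrightarrow> q x = 1" by (simp add: minkowski_q_def)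

lemma mm_cases:
  "(\<forall>A. emeasure MM A = 0) \<or> (\<forall>a b. a \<le> b \<longrightarrow> emeasure MM {a<..b} = ennreal (q b - q a))"
proof (cases "\<exists>\<mu>'. (\<forall>i\<in>{(a,b). a \<le> b}. \<mu>' ((\<lambda>(a,b). {a<..b::real}) i) = (\<lambda>(a,b). ennreal (q b - q a)) i) \<and>
     measure_space UNIV (sigma_sets UNIV ((\<lambda>(a,b). {a<..b::real}) ` {(a,b). a \<le> b})) \<mu>'")
  case True
  then obtain \<mu>' where eq: "\<forall>i\<in>{(a,b). a \<le> b}. \<mu>' ((\<lambda>(a,b). {a<..b::real}) i) = (\<lambda>(a,b). ennreal (q b - q a)) i"
    and ms: "measure_space UNIV (sigma_sets UNIV ((\<lambda>(a,b). {a<..b::real}) ` {(a,b). a \<le> b})) \<mu>'" by blast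
  have M: "MM = extend_measure UNIV {(a,b). a \<le> b} (\<lambda>(a,b). {a<..b}) (\<lambda>(a,b). ennreal (q b - q a))"
    by (simp add: minkowski_measure_def interval_measure_def)
  have sets: "sets MM = sigma_sets UNIV ((\<lambda>(a,b). {a<..b::real}) ` {(a,b). a \<le> b})"
    by (subst M, rule sets_extend_measure) auto
  have pos: "positive (sets MM) \<mu>'" and ca: "countably_additive (sets MM) \<mu>'"
    using ms unfolding measure_space_def sets by auto
  show ?thesis
  proof (rule disjI2, intro allI impI)
    fix a b :: real assume ab: "a \<le> b"
    show "emeasure MM {a<..b} = ennreal (q b - q a)"
      by (rule emeasure_extend_measure_Pair[OF M _ _ pos ca])
         (use eq ab in auto)
  qed
next
  case False
  then have "MM = measure_of UNIV ((\<lambda>(a,b). {a<..b::real}) ` {(a,b). a \<le> b}) (\<lambda>_. 0)"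
    unfolding minkowski_measure_def interval_measure_def extend_measure_def
    apply (subst if_not_P)
    apply blast
    apply (rule refl)
    done
  then have "emeasure MM A = 0" for A by (metis emeasure_sigma)
  then show ?thesis by blast
qed

context
  assumes H: "\<forall>a b. a \<le> b \<longrightarrow> emeasure MM {a<..b} = ennreal (q b - q a)"
begin

lemma Hab: "a \<le> b \<Longrightarrow> emeasure MM {a<..b} = ennreal (q b - q a)" using H by blast

lemma q01: assumes "0 \<le> x" "x \<le> 1" shows "0 \<le> q x \<and> q x \<le> 1"
proof -
  have "emeasure MM {0<..x} + emeasure MM {x<..1} = emeasure MM ({0<..x} \<union> {x<..1})"
    by (rule plus_emeasure) auto
  also have "{0<..x} \<union> {x<..1} = {0<..(1::real)}" using assms by auto
  finally have eq: "ennreal (q x) + ennreal (1 - q x) = 1"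
    using assms by (simp add: Hab q_nonpos q_ge1)
  show ?thesis
  proof (rule ccontr)
    assume "\<not> ?thesis"
    then consider "q x < 0" | "q x > 1" by linarith
    then show False
    proof cases
      case 1
      then have "ennreal (1 - q x) = 1" using eq by (simp add: ennreal_neg)
      then have "1 - q x = 1" using 1 by (simp add: ennreal_eq_1)
      then show False using 1 by simp
    next
      case 2
      then have "ennreal (q x) = 1" using eq by (simp add: ennreal_neg)
      then have "q x = 1" using 2 by (simp add: ennreal_eq_1)
      then show False using 2 by simp
    qed
  qed
qed

lemma shrink_lim: "(\<lambda>m. emeasure MM {a<..a + 1 / Suc m}) \<longlonglongrightarrow> 0"
proof -
  define A where "A m = {a<..a + 1 / real (Suc m)}" for m
  have dec: "decseq A"
  proof (rule decseq_SucI)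
    fix m
    have "1 / real (Suc (Suc m)) \<le> 1 / real (Suc m)" by (simp add: frac_le)
    then show "A (Suc m) \<subseteq> A m" by (auto simp: A_def)
  qed
  have inter: "(\<Inter>m. A m) = {}"
  proof (rule ccontr)
    assume "(\<Inter>m. A m) \<noteq> {}"
    then obtain y where y: "\<And>m. y \<in> A m" by blast
    then have "y - a > 0" by (auto simp: A_def)
    then obtain n :: nat where n: "n > 0" "inverse (real n) < y - a"
      using ex_inverse_of_nat_less by blast
    then obtain m where "n = Suc m" by (cases n) auto
    with n y[of m] show False by (auto simp: A_def inverse_eq_divide)
  qed
  have "(\<lambda>m. emeasure MM (A m)) \<longlonglongrightarrow> emeasure MM (\<Inter>m. A m)"
    by (rule Lim_emeasure_decseq[OF _ dec]) (auto simp: A_def Hab)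
  then have "(\<lambda>m. emeasure MM (A m)) \<longlonglongrightarrow> 0" by (simp only: inter emeasure_empty)
  then show ?thesis by (simp only: A_def)
qed

lemma atom0: "emeasure MM {x} = 0"
proof -
  have le: "emeasure MM {x} \<le> emeasure MM {1 - x<..(1 - x) + 1 / Suc m}" for m
  proof -
    define h where "h = 1 / real (Suc m)"
    have h: "h > 0" by (simp add: h_def)
    have "emeasure MM {x} \<le> emeasure MM {x - h<..x}"
      by (rule emeasure_mono) (use h in auto)
    also have "\<dots> = ennreal (q x - q (x - h))" using h by (simp add: Hab)
    also have "q x - q (x - h) = q (1 - x + h) - q (1 - x)"
      using mq_sym[of x] mq_sym[of "x - h"] by (simp add: algebra_simps)
    also have "ennreal (q (1 - x + h) - q (1 - x)) = emeasure MM {1 - x<..(1 - x) + h}"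
      using h by (simp add: Hab)
    finally show ?thesis by (simp add: h_def)
  qed
  have "emeasure MM {x} \<le> 0"
    by (rule LIMSEQ_le_const[OF shrink_lim]) (use le in auto)
  then show ?thesis by simp
qed

lemma AE01: "AE x in MM. x \<in> {0<..1}"
proof (rule AE_I')
  define B where "B m = {- real m<..0} \<union> {1<..1 + real m}" for m
  show "(\<Union>m. B m) \<in> null_sets MM"
  proof (rule null_sets_UN)
    fix m
    have "emeasure MM {- real m<..0} = 0" by (simp add: Hab q_nonpos)
    moreover have "emeasure MM {1<..1 + real m} = 0" by (simp add: Hab q_ge1)
    ultimately show "B m \<in> null_sets MM" unfolding B_def
      by (intro null_sets.Un) (auto simp: null_sets_def)
  qed
  show "{x \<in> space MM. \<not> x \<in> {0<..1}} \<subseteq> (\<Union>m. B m)"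
  proof
    fix x assume "x \<in> {x \<in> space MM. \<not> x \<in> {0<..1}}"
    then have x: "x \<le> 0 \<or> x > 1" by auto
    obtain m :: nat where m: "real m > \<bar>x\<bar>" using reals_Archimedean2 by blast
    then have "x \<in> B m" using x by (auto simp: B_def)
    then show "x \<in> (\<Union>m. B m)" by blast
  qed
qed

lemma MM_UNIV: "emeasure MM UNIV = 1"
proof -
  have "emeasure MM UNIV = emeasure MM {0<..1}"
    by (rule emeasure_eq_AE) (use AE01 in auto)
  also have "\<dots> = 1" by (simp add: Hab q_nonpos q_ge1)
  finally show ?thesis .
qed

lemma prob_MM: "prob_space MM"
  by (rule prob_spaceI) (simp add: MM_UNIV)

lemma real_dist_MM: "real_distribution MM"
  unfolding real_distribution_def real_distribution_axioms_def using prob_MM by simp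

lemma cdf_MM: "cdf MM x = q x"
proof -
  have "measure MM {..x} = measure MM {0<..min x 1}"
    by (rule measure_eq_AE) (use AE01 in auto)
  also have "\<dots> = q x"
  proof (cases "x \<le> 0")
    case True
    then have "{0<..min x 1} = {}" by auto
    then show ?thesis using True by (simp add: q_nonpos)
  next
    case False
    then have "0 \<le> min x 1" "min x 1 \<le> 1" by auto
    then have qq: "0 \<le> q (min x 1)" using q01 by blast
    have "measure MM {0<..min x 1} = q (min x 1)"
      using False qq by (simp add: measure_def Hab q_nonpos)
    also have "\<dots> = q x" using False by (cases "x \<le> 1") (auto simp: min_def q_ge1)
    finally show ?thesis .
  qed
  finally show ?thesis by (simp add: cdf_def)
qed

lemma AE_neq: "AE y in MM. y \<noteq> a"
  by (rule AE_I'[of "{a}"]) (auto simp: null_sets_def atom0)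

lemma distr_MM: "distr MM borel (\<lambda>x. 1 - x) = MM"
proof (rule cdf_unique)
  interpret prob_space MM by (rule prob_MM)
  show "real_distribution MM" by (rule real_dist_MM)
  show "real_distribution (distr MM borel (\<lambda>x. 1 - x))"
    unfolding real_distribution_def real_distribution_axioms_def
    by (auto intro!: prob_space_distr)
  show "cdf (distr MM borel (\<lambda>x. 1 - x)) = cdf MM"
  proof
    fix x :: real
    have "cdf (distr MM borel (\<lambda>x. 1 - x)) x = measure MM ((\<lambda>x. 1 - x) -` {..x} \<inter> space MM)"
      by (simp add: cdf_def measure_distr)
    also have "(\<lambda>x. 1 - x) -` {..x} \<inter> space MM = space MM - {..<1 - x}" by auto
    also have "measure MM (space MM - {..<1 - x}) = 1 - measure MM {..<1 - x}"
      by (rule prob_compl) simp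
    also have "measure MM {..<1 - x} = measure MM {..1 - x}"
      by (rule measure_eq_AE) (use AE_neq[of "1 - x"] in auto)
    also have "\<dots> = q (1 - x)" using cdf_MM by (simp add: cdf_def)
    also have "1 - q (1 - x) = q x" using mq_sym[of x] by simp
    also have "q x = cdf MM x" by (simp add: cdf_MM)
    finally show "cdf (distr MM borel (\<lambda>x. 1 - x)) x = cdf MM x" .
  qed
qed

lemma sin_zero: "integral\<^sup>L MM (\<lambda>x. indicator {0..1} x * sin (2*pi*real n*x)) = 0"
proof -
  define f where "f x = indicator {0..1} x * sin (2*pi*real n*x)" for x :: real
  have fm: "f \<in> borel_measurable borel" unfolding f_def by measurable
  have "integral\<^sup>L MM f = integral\<^sup>L (distr MM borel (\<lambda>x. 1 - x)) f" by (simp add: distr_MM)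
  also have "\<dots> = integral\<^sup>L MM (\<lambda>x. f (1 - x))"
    by (rule integral_distr) (auto intro: fm)
  also have "(\<lambda>x. f (1 - x)) = (\<lambda>x. - f x)"
  proof
    fix x :: real
    have "sin (2*pi*real n*(1-x)) = - sin (2*pi*real n*x)"
    proof -
      have "2*pi*real n*(1-x) = 2 * real n * pi - 2*pi*real n*x" by (simp add: algebra_simps)
      then show ?thesis by (simp add: sin_diff)
    qed
    moreover have "indicator {0..1} (1 - x) = (indicator {0..1} x :: real)" by (auto simp: indicator_def)
    ultimately show "f (1 - x) = - f x" by (simp add: f_def)
  qed
  finally have "integral\<^sup>L MM f = - integral\<^sup>L MM f" by simp
  then have "integral\<^sup>L MM f = 0" by simp
  then show ?thesis by (simp add: f_def[abs_def])
qed

lemma ee_split: "ee m x = complex_of_real (cos (2*pi*real_of_int m*x)) + \<i> * complex_of_real (sin (2*pi*real_of_int m*x))"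
  unfolding ee_def cis_conv_exp[symmetric] by (simp add: complex_eq_iff)

lemma coeff_MM:
  "integral\<^sup>L MM (\<lambda>x. indicator {0..1} x *\<^sub>R ee m x) =
    complex_of_real (integral\<^sup>L MM (\<lambda>x. indicator {0..1} x * cos (2*pi*real (nat \<bar>m\<bar>)*x)))"
proof -
  interpret prob_space MM by (rule prob_MM)
  define n where "n = nat \<bar>m\<bar>"
  have cs: "cos (2*pi*real_of_int m*x) = cos (2*pi*real n*x)" for x
  proof (cases "m \<ge> 0")
    case True then show ?thesis by (simp add: n_def)
  next
    case False
    then have "real_of_int m = - real n" by (simp add: n_def)
    then have "2*pi*real_of_int m*x = - (2*pi*real n*x)" by simp
    then show ?thesis by (simp only: cos_minus)
  qed
  have eq: "(\<lambda>x. indicator {0..1} x *\<^sub>R ee m x) = (\<lambda>x. complex_of_real (indicator {0..1} x * cos (2*pi*real n*x)) +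
        \<i> * complex_of_real (indicator {0..1} x * sin (2*pi*real_of_int m*x)))"
    by (rule ext) (simp only: ee_split cs, simp add: scaleR_conv_of_real algebra_simps)
  have sz: "integral\<^sup>L MM (\<lambda>x. indicator {0..1} x * sin (2*pi*real_of_int m*x)) = 0"
  proof (cases "m \<ge> 0")
    case True
    then have "real_of_int m = real n" by (simp add: n_def)
    then show ?thesis using sin_zero[of n] by simp
  next
    case False
    then have "real_of_int m = - real n" by (simp add: n_def)
    then show ?thesis using sin_zero[of n] by simp
  qed
  have i1: "integrable MM (\<lambda>x. complex_of_real (indicator {0..1} x * cos (2*pi*real n*x)))"
    by (rule integrable_const_bound[where B=1]) (auto simp: indicator_def)
  have i2: "integrable MM (\<lambda>x. \<i> * complex_of_real (indicator {0..1} x * sin (2*pi*real_of_int m*x)))"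
    by (rule integrable_const_bound[where B=1]) (auto simp: indicator_def norm_mult)
  show ?thesis
    by (simp only: eq Bochner_Integration.integral_add[OF i1 i2] integral_mult_right_zero integral_complex_of_real sz)
       (simp add: n_def)
qed

end


theorem theorem3:
  fixes k :: nat
  assumes "(\<lambda>n::nat. LINT x:{0..1}|minkowski_measure. cos (2 * pi * real n * x))
             \<longlonglongrightarrow> 0"
  shows "((\<lambda>t::real. LINT x:{0..1}|minkowski_measure.
             (\<i> * complex_of_real x) ^ k * exp (\<i> * complex_of_real (t * x)))
          \<longlongrightarrow> 0) at_infinity"
proof -
  consider (z) "\<forall>A. emeasure MM A = 0" | (nz) "\<forall>a b. a \<le> b \<longrightarrow> emeasure MM {a<..b} = ennreal (q b - q a)"
    using mm_cases by blast
  then show ?thesis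
  proof cases
    case z
    have "UNIV \<in> null_sets MM" using z by (simp add: null_sets_def)
    then have ae: "AE x in MM. False" by (rule AE_I') simp
    have "(LINT x:{0..1}|minkowski_measure.
             (\<i> * complex_of_real x) ^ k * exp (\<i> * complex_of_real (t * x))) = 0" for t
      unfolding set_lebesgue_integral_def by (rule integral_eq_zero_AE) (use ae in auto)
    then show ?thesis by simp
  next
    case nz
    have dec: "\<exists>K. \<forall>m::int. \<bar>m\<bar> \<ge> K \<longrightarrow> cmod (integral\<^sup>L MM (\<lambda>x. indicator {0..1} x *\<^sub>R ee m x)) < e"
      if e: "e > 0" for e
    proof -
      have "(\<lambda>n::nat. integral\<^sup>L MM (\<lambda>x. indicator {0..1} x * cos (2 * pi * real n * x))) \<longlonglongrightarrow> 0"
        using assms by (simp add: set_lebesgue_integral_def)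
      from LIMSEQ_D[OF this e] obtain N where
        N: "\<And>n. n \<ge> N \<Longrightarrow> norm (integral\<^sup>L MM (\<lambda>x. indicator {0..1} x * cos (2 * pi * real n * x)) - 0) < e"
        by blast
      have "cmod (integral\<^sup>L MM (\<lambda>x. indicator {0..1} x *\<^sub>R ee m x)) < e" if m: "\<bar>m\<bar> \<ge> int N" for m :: int
      proof -
        have "nat \<bar>m\<bar> \<ge> N" using m by linarith
        then show ?thesis using N[of "nat \<bar>m\<bar>"] by (simp add: coeff_MM[OF nz])
      qed
      then show ?thesis by blast
    qed
    have md: "\<exists>R. \<forall>t. \<bar>t\<bar> \<ge> R \<longrightarrow>
     cmod (integral\<^sup>L MM (\<lambda>x. indicator {0..1} x *\<^sub>R ((\<i> * complex_of_real x)^k * exp (\<i> * complex_of_real (t*x))))) < e"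
      if "e > 0" for e
      by (rule main_decay[OF prob_MM[OF nz] sets_MM atom0[OF nz] atom0[OF nz] dec that])
    show ?thesis
      unfolding Lim_at_infinity set_lebesgue_integral_def using md by (simp add: dist_norm)
  qed
qed


end
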